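(* Let $q$ be a prime power, $n\ge1$, and let $C=\langle B_r\rangle\oplus\langle B_t\rangle\subseteq\mathbb{F}_q^n$ be an $\mathbb{F}_q$-linear code, where $B_r$ ($r\times n$) and $B_t$ ($t\times n$) are matrices over $\mathbb{F}_q$ with linearly independent rows, such that $\langle B_t\rangle\subseteq C^{\perp_e}$ and $t=\dim\langle B_t\rangle\ge 2$. Let $A$ be an invertible $t\times t$ matrix over $\mathbb{F}_q$ with no eigenvalue in $\mathbb{F}_q$. Let $c=\mathrm{rank}(HH^T)=\dim C-\dim(C\cap C^{\perp_e})$, where $H$ is any generator matrix of $C$ (the number of maximally entangled states of the EAQECC determined by $C$). Then $D_A$ gives rise to an EAQECC with parameters $[[n,\,n-2r-t+c,\,d';\,c]]_q$, i.e. $c(D_A)=c$, $k(D_A)=n-2r-t+c$, and $d'=d(D_A)\ge\min\left\{\delta_1,\left\lceil\left(1+\frac1q\right)\delta_2\right\rceil\right\}$, where $\delta_1=d_H(C^{\perp_e})$ and $\delta_2=d_H(\langle B_r\rangle^{\perp_e})$.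
   Context: $\mathbb{F}_q$ is the finite field with $q$ elements. $x\cdot_e y=\sum_i x_iy_i$ on $\mathbb{F}_q^n$; $V^{\perp_e}$ is the Euclidean dual; $\langle B\rangle$ is the row space of a matrix $B$; $d_H(V)$ is the minimum Hamming weight of a nonzero vector of $V$. On $\mathbb{F}_q^{2n}$, $(x|y)\cdot_s(z|w)=x\cdot_e w-z\cdot_e y$ and $D^{\perp_s}$ is the symplectic dual. The symplectic weight of $(x|y)$ is $\#\{j:(x_j,y_j)\neq(0,0)\}$; $d_s(S)$ is the minimum symplectic weight of a nonzero element of $S$. For a linear code $D\subseteq\mathbb{F}_q^{2n}$: $c(D)=\frac12(\dim D-\dim(D\cap D^{\perp_s}))$, $k(D)=n-\dim D+c(D)$, $d(D)=d_s(D^{\perp_s}\setminus(D\cap D^{\perp_s}))$; $D$ gives rise to an EAQECC with parameters $[[n,k(D),d(D);c(D)]]_q$. $D_A\subseteq\mathbb{F}_q^{2n}$ is the code generated by the rows of $\begin{pmatrix}B_t & AB_t\\ B_r & 0\\ 0 & B_r\end{pmatrix}$. *)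

theory Defs
  imports "Jordan_Normal_Form.Jordan_Normal_Form" "Jordan_Normal_Form.DL_Rank" "HOL-Library.Extended_Nat"
begin

(* Vectors of F_q^m are JNF vectors in carrier_vec m; the field F_q is a type
   'a :: {finite, field} with q = CARD('a). *)

definition sdim :: "nat \<Rightarrow> 'a::field vec set \<Rightarrow> nat" where
  "sdim m W = vectorspace.dim class_ring ((module_vec TYPE('a) m)\<lparr>carrier := W\<rparr>)"

definition rowsp :: "nat \<Rightarrow> 'a::field mat \<Rightarrow> 'a vec set" where
  "rowsp m B = (vec_space.row_space m B :: 'a vec set)"

definition rows_lin_indep :: "nat \<Rightarrow> 'a::field mat \<Rightarrow> bool" where
  "rows_lin_indep m B \<longleftrightarrow> distinct (rows B) \<and>
     module.lin_indpt class_ring (module_vec TYPE('a) m) (set (rows B))"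

definition edual :: "nat \<Rightarrow> 'a::field vec set \<Rightarrow> 'a vec set" where
  "edual m V = {x \<in> carrier_vec m. \<forall>y\<in>V. x \<bullet> y = 0}"

definition hwt :: "'a::zero vec \<Rightarrow> nat" where
  "hwt x = card {j. j < dim_vec x \<and> x $ j \<noteq> 0}"

definition dH :: "nat \<Rightarrow> 'a::zero vec set \<Rightarrow> nat" where
  "dH m V = Inf (hwt ` (V - {0\<^sub>v m}))"

definition sprod :: "nat \<Rightarrow> 'a::comm_ring vec \<Rightarrow> 'a vec \<Rightarrow> 'a" where
  "sprod n u v = vec_first u n \<bullet> vec_last v n - vec_first v n \<bullet> vec_last u n"

definition sdual :: "nat \<Rightarrow> 'a::comm_ring vec set \<Rightarrow> 'a vec set" where
  "sdual n D = {u \<in> carrier_vec (2*n). \<forall>v\<in>D. sprod n u v = 0}"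

definition swt :: "nat \<Rightarrow> 'a::zero vec \<Rightarrow> nat" where
  "swt n u = card {j. j < n \<and> (u $ j \<noteq> 0 \<or> u $ (n + j) \<noteq> 0)}"

definition c_EA :: "nat \<Rightarrow> 'a::field vec set \<Rightarrow> nat" where
  "c_EA n D = (sdim (2*n) D - sdim (2*n) (D \<inter> sdual n D)) div 2"

definition k_EA :: "nat \<Rightarrow> 'a::field vec set \<Rightarrow> int" where
  "k_EA n D = int n - int (sdim (2*n) D) + int (c_EA n D)"

(* minimum over the empty set is taken to be infinity *)
definition d_EA :: "nat \<Rightarrow> 'a::field vec set \<Rightarrow> enat" where
  "d_EA n D = Inf ((\<lambda>u. enat (swt n u)) ` (sdual n D - (D \<inter> sdual n D)))"

definition DA_gen :: "'a::field mat \<Rightarrow> 'a mat \<Rightarrow> 'a mat \<Rightarrow> 'a mat" where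
  "DA_gen A Br Bt = four_block_mat Bt (A * Bt)
      (Br @\<^sub>r 0\<^sub>m (dim_row Br) (dim_col Br)) (0\<^sub>m (dim_row Br) (dim_col Br) @\<^sub>r Br)"

definition D_A :: "nat \<Rightarrow> 'a::field mat \<Rightarrow> 'a mat \<Rightarrow> 'a mat \<Rightarrow> 'a vec set" where
  "D_A n A Br Bt = rowsp (2*n) (DA_gen A Br Bt)"

end

theory Submission
  imports Defs
begin

lemma card_carrier_vec: "card (carrier_vec d :: 'a::finite vec set) = card (UNIV::'a set) ^ d"
  and finite_carrier_vec: "finite (carrier_vec d :: 'a::finite vec set)"
proof -
  have b: "bij_betw (\<lambda>v. \<lambda>i\<in>{..<d}. v $ i) (carrier_vec d) ({..<d} \<rightarrow>\<^sub>E (UNIV::'a set))"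
  proof (rule bij_betwI[where g = "\<lambda>f. vec d f"])
    show "(\<lambda>v. \<lambda>i\<in>{..<d}. v $ i) \<in> carrier_vec d \<rightarrow> {..<d} \<rightarrow>\<^sub>E (UNIV::'a set)" by auto
    show "(\<lambda>f. vec d f) \<in> ({..<d} \<rightarrow>\<^sub>E (UNIV::'a set)) \<rightarrow> carrier_vec d" by auto
    show "\<And>x. x \<in> carrier_vec d \<Longrightarrow> vec d (\<lambda>i\<in>{..<d}. x $ i) = (x::'a vec)" by (auto intro!: eq_vecI)
    show "\<And>y. y \<in> {..<d} \<rightarrow>\<^sub>E (UNIV::'a set) \<Longrightarrow> (\<lambda>i\<in>{..<d}. vec d y $ i) = y"
      by (auto simp: PiE_def extensional_def restrict_def fun_eq_iff)
  qed
  then have "card (carrier_vec d :: 'a vec set) = card ({..<d} \<rightarrow>\<^sub>E (UNIV::'a set))" by (rule bij_betw_same_card)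
  also have "\<dots> = card (UNIV::'a set)^d" by (simp add: card_funcsetE)
  finally show "card (carrier_vec d :: 'a::finite vec set) = card (UNIV::'a set) ^ d" .
  show "finite (carrier_vec d :: 'a::finite vec set)"
    using bij_betw_finite[OF b] by (simp add: finite_PiE)
qed

lemma card_subspace:
  fixes W :: "'a::{finite,field} vec set"
  assumes sub: "W \<subseteq> carrier_vec m" and z: "0\<^sub>v m \<in> W"
    and add: "\<And>v w. v \<in> W \<Longrightarrow> w \<in> W \<Longrightarrow> v + w \<in> W"
    and sm: "\<And>c v. v \<in> W \<Longrightarrow> c \<cdot>\<^sub>v v \<in> W"
  shows "card W = card (UNIV::'a set) ^ sdim m W"
proof -
  interpret V: vec_space "TYPE('a)" m .
  have subm: "submodule class_ring W V.V"
    unfolding submodule_def using sub z add sm V.module_axioms by auto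
  have subsp: "subspace class_ring W V.V" unfolding subspace_def using subm V.vectorspace_axioms by auto
  interpret W: vectorspace class_ring "V.vs W" using V.subspace_is_vs[OF subsp] .
  have finW: "finite W" using finite_carrier_vec sub finite_subset by blast
  have span_W: "V.span W = W"  using V.span_is_subset[OF subset_refl subm] V.in_own_span[OF sub] by auto
  have "W.span W = W" using V.span_li_not_depend(1)[OF subset_refl subm] span_W by simp
  hence "W.fin_dim" unfolding W.fin_dim_def using finW by auto
  then obtain \<beta> where fb: "finite \<beta>" "W.basis \<beta>" using W.finite_basis_exists by auto
  have dimW: "sdim m W = card \<beta>" unfolding sdim_def using W.dim_basis[OF fb] by simp
  from fb have bW: "\<beta> \<subseteq> W" and li: "\<not> W.lin_dep \<beta>" and gen: "W.span \<beta> = W" unfolding W.basis_def by auto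
  have li': "\<not> V.lin_dep \<beta>" using V.span_li_not_depend(2)[OF bW subm] li by simp
  have gen': "V.span \<beta> = W" using V.span_li_not_depend(1)[OF bW subm] gen by simp
  obtain bl where bl: "set bl = \<beta>" "distinct bl" using finite_distinct_list[OF fb(1)] by auto
  define M where "M = mat_of_cols m bl"
  have blc: "set bl \<subseteq> carrier_vec m" using bl bW sub by auto
  have colsM: "cols M = bl" unfolding M_def using cols_mat_of_cols[OF blc] .
  have M: "M \<in> carrier_mat m (length bl)" unfolding M_def by auto
  have "W = V.col_space M" unfolding V.col_space_def colsM bl gen' ..
  also have "\<dots> = {y \<in> carrier_vec m. \<exists>x\<in>carrier_vec (length bl). M *\<^sub>v x = y}" using V.col_space_eq[OF M] M by auto
  finally have Weq: "W = (\<lambda>x. M *\<^sub>v x) ` carrier_vec (length bl)" using M by auto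
  have inj: "inj_on (\<lambda>x. M *\<^sub>v x) (carrier_vec (length bl))"
  proof (rule inj_onI)
    fix x y assume x: "x \<in> carrier_vec (length bl)" and y: "y \<in> carrier_vec (length bl)" and eq: "M *\<^sub>v x = M *\<^sub>v y"
    have "M *\<^sub>v (x - y) = 0\<^sub>v m" using eq x y M by (simp add: mult_minus_distrib_mat_vec)
    moreover have "distinct (cols M)" using colsM bl by simp
    ultimately have "x - y = 0\<^sub>v (length bl)" using V.lin_depI[OF M, of "x-y"] li' colsM bl x y by auto
    then have "\<And>i. i < length bl \<Longrightarrow> x $ i = y $ i"
    proof -
      fix i assume i: "i < length bl"
      have "(x - y) $ i = 0" using \<open>x - y = 0\<^sub>v (length bl)\<close> i by simp
      thus "x $ i = y $ i" using i y by simp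
    qed
    then show "x = y" using x y by (intro eq_vecI) auto
  qed
  have "card W = card (carrier_vec (length bl) :: 'a vec set)" using Weq inj card_image by auto
  also have "\<dots> = card (UNIV::'a set)^card \<beta>" using card_carrier_vec bl distinct_card by metis
  finally show ?thesis using dimW by simp
qed

lemma card_UNIV_option': "card (UNIV :: 'a::finite option set) = card (UNIV :: 'a set) + 1"
proof -
  have "(UNIV :: 'a option set) = insert None (range Some)" by (auto intro: option.exhaust)
  moreover have "card (range (Some :: 'a \<Rightarrow> _)) = card (UNIV :: 'a set)" by (simp add: card_image)
  moreover have "card (insert None (range (Some :: 'a \<Rightarrow> _))) = Suc (card (range (Some::'a\<Rightarrow>_)))"
    by (subst card_insert_disjoint) auto
  ultimately show ?thesis by simp
qed

lemma count_nonzero: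
  fixes x y :: "'a::{finite,field}"
  shows "card {ov. (case ov of None \<Rightarrow> x | Some l \<Rightarrow> y + l * x) \<noteq> 0}
        = (if x \<noteq> 0 \<or> y \<noteq> 0 then card (UNIV :: 'a set) else 0)"
proof (cases "x = 0")
  case True
  show ?thesis
  proof (cases "y = 0")
    case True thus ?thesis using \<open>x = 0\<close> by (simp split: option.splits)
  next
    case False
    have "{ov. (case ov of None \<Rightarrow> x | Some l \<Rightarrow> y + l * x) \<noteq> 0} = range Some"
      using True False by (auto split: option.splits)
    thus ?thesis using False by (simp add: card_image)
  qed
next
  case False
  have "{ov. (case ov of None \<Rightarrow> x | Some l \<Rightarrow> y + l * x) \<noteq> 0} = UNIV - {Some (- y / x)}"
    using False by (auto split: option.splits simp: field_simps add_eq_0_iff)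
  thus ?thesis using False by (simp add: card_UNIV_option')
qed

lemma hwt_sum: "v \<in> carrier_vec n \<Longrightarrow> hwt v = (\<Sum>j<n. if v $ j \<noteq> 0 then 1 else 0)"
  unfolding hwt_def by (simp add: sum.If_cases Collect_conj_eq lessThan_def Int_commute)

lemma two_dim_support:
  fixes x y :: "'a::{finite,field} vec"
  assumes x: "x \<in> carrier_vec n" and y: "y \<in> carrier_vec n"
    and wx: "d \<le> hwt x" and wy: "\<And>l. d \<le> hwt (y + l \<cdot>\<^sub>v x)"
  shows "(card (UNIV :: 'a option set)) * d \<le> card (UNIV::'a set) * card {j. j < n \<and> (x $ j \<noteq> 0 \<or> y $ j \<noteq> 0)}"
proof -
  define f :: "'a option \<Rightarrow> 'a vec" where "f ov = (case ov of None \<Rightarrow> x | Some l \<Rightarrow> y + l \<cdot>\<^sub>v x)" for ov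
  have fc: "f ov \<in> carrier_vec n" for ov using x y by (auto simp: f_def split: option.splits)
  have fj: "f ov $ j = (case ov of None \<Rightarrow> x $ j | Some l \<Rightarrow> y $ j + l * x $ j)" if "j < n" for ov j
    using x y that by (auto simp: f_def split: option.splits)
  have "(card (UNIV :: 'a option set)) * d = (\<Sum>ov\<in>(UNIV::'a option set). d)" by simp
  also have "\<dots> \<le> (\<Sum>ov\<in>UNIV. hwt (f ov))"
    by (rule sum_mono) (use wx wy in \<open>auto simp: f_def split: option.splits\<close>)
  also have "\<dots> = (\<Sum>ov\<in>UNIV. \<Sum>j<n. if f ov $ j \<noteq> 0 then 1 else 0)"
    using hwt_sum[OF fc] by simp
  also have "\<dots> = (\<Sum>j<n. \<Sum>ov\<in>UNIV. if f ov $ j \<noteq> 0 then 1 else 0)" by (rule sum.swap)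
  also have "\<dots> = (\<Sum>j<n. card {ov. f ov $ j \<noteq> 0})"
    by (simp add: sum.If_cases)
  also have "\<dots> = (\<Sum>j<n. if x $ j \<noteq> 0 \<or> y $ j \<noteq> 0 then card (UNIV :: 'a set) else 0)"
    by (rule sum.cong) (simp_all add: fj count_nonzero)
  also have "\<dots> = card (UNIV::'a set) * card {j. j < n \<and> (x $ j \<noteq> 0 \<or> y $ j \<noteq> 0)}"
    by (simp add: sum.If_cases Collect_conj_eq lessThan_def Int_commute)
  finally show ?thesis .
qed

lemma dH_le: "v \<in> V \<Longrightarrow> v \<noteq> 0\<^sub>v m \<Longrightarrow> dH m V \<le> hwt v"
  unfolding dH_def by (rule cInf_lower) auto

lemma rowsp_eq:
  assumes B: "B \<in> carrier_mat k m"
  shows "rowsp m B = (\<lambda>a. transpose_mat B *\<^sub>v a) ` carrier_vec k"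
proof -
  interpret V: vec_space "TYPE('a::field)" m .
  show ?thesis unfolding rowsp_def V.row_space_eq[OF B] using B by auto
qed

lemma rowsp_closed:
  fixes B :: "'a::field mat"
  assumes B: "B \<in> carrier_mat k m"
  shows "rowsp m B \<subseteq> carrier_vec m" "0\<^sub>v m \<in> rowsp m B"
    "\<And>v w. v \<in> rowsp m B \<Longrightarrow> w \<in> rowsp m B \<Longrightarrow> v + w \<in> rowsp m B"
    "\<And>c v. v \<in> rowsp m B \<Longrightarrow> c \<cdot>\<^sub>v v \<in> rowsp m B"
proof -
  interpret V: vec_space "TYPE('a)" m .
  have s: "set (rows B) \<subseteq> carrier_vec m" using B by (auto simp: rows_def)
  have sm: "submodule class_ring (rowsp m B) V.V"
    unfolding rowsp_def V.row_space_def by (rule V.span_is_submodule[OF s])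
  show "rowsp m B \<subseteq> carrier_vec m" using submodule.subset[OF sm] by simp
  show "0\<^sub>v m \<in> rowsp m B" using submodule.zero_closed[OF sm] by simp
  show "\<And>v w. v \<in> rowsp m B \<Longrightarrow> w \<in> rowsp m B \<Longrightarrow> v + w \<in> rowsp m B"
    using submodule.m_closed[OF sm] by simp
  show "\<And>c v. v \<in> rowsp m B \<Longrightarrow> c \<cdot>\<^sub>v v \<in> rowsp m B"
    using submodule.smult_closed[OF sm] by simp
qed

lemma append_rows_T_mult:
  assumes X: "X \<in> carrier_mat k1 m" and Y: "Y \<in> carrier_mat k2 m"
    and b: "b \<in> carrier_vec k1" and c: "c \<in> carrier_vec k2"
  shows "transpose_mat (X @\<^sub>r Y) *\<^sub>v (b @\<^sub>v c) = transpose_mat X *\<^sub>v b + transpose_mat Y *\<^sub>v c"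
proof (rule eq_vecI)
  show "dim_vec (transpose_mat (X @\<^sub>r Y) *\<^sub>v (b @\<^sub>v c)) = dim_vec (transpose_mat X *\<^sub>v b + transpose_mat Y *\<^sub>v c)"
    using X Y by (simp add: append_rows_def)
  fix i assume "i < dim_vec (transpose_mat X *\<^sub>v b + transpose_mat Y *\<^sub>v c)"
  hence i: "i < m" using X Y by simp
  have "col (X @\<^sub>r Y) i = col X i @\<^sub>v col Y i"
    unfolding append_rows_def using X Y i by (subst col_four_block_mat(1)[of _ k1 m _ 0 _ k2]) auto
  hence "(transpose_mat (X @\<^sub>r Y) *\<^sub>v (b @\<^sub>v c)) $ i = (col X i @\<^sub>v col Y i) \<bullet> (b @\<^sub>v c)"
    using X Y i by (simp add: append_rows_def)
  also have "\<dots> = col X i \<bullet> b + col Y i \<bullet> c"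
    by (rule scalar_prod_append) (use X Y b c in auto)
  finally show "(transpose_mat (X @\<^sub>r Y) *\<^sub>v (b @\<^sub>v c)) $ i = (transpose_mat X *\<^sub>v b + transpose_mat Y *\<^sub>v c) $ i"
    using X Y i by simp
qed

lemma vec_first_append[simp]: "a \<in> carrier_vec n \<Longrightarrow> vec_first (a @\<^sub>v b) n = a"
  by (rule eq_vecI) (auto simp: vec_first_def)

lemma vec_last_append[simp]: "b \<in> carrier_vec n \<Longrightarrow> vec_last (a @\<^sub>v b) n = b"
  by (rule eq_vecI) (auto simp: vec_last_def)

lemma zero_by_dual:
  fixes M :: "'a::comm_ring_1 mat"
  assumes M: "M \<in> carrier_mat k m" and z: "z \<in> carrier_vec m"
    and h: "\<And>a. a \<in> carrier_vec k \<Longrightarrow> (transpose_mat M *\<^sub>v a) \<bullet> z = 0"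
  shows "M *\<^sub>v z = 0\<^sub>v k"
proof (rule eq_vecI)
  fix j assume "j < dim_vec (0\<^sub>v k :: 'a vec)"
  hence j: "j < k" by simp
  have "(M *\<^sub>v z) $ j = unit_vec k j \<bullet> (M *\<^sub>v z)" using M z j by simp
  also have "\<dots> = (transpose_mat M *\<^sub>v unit_vec k j) \<bullet> z"
    by (rule transpose_vec_mult_scalar[symmetric]) (use M z in auto)
  also have "\<dots> = 0" using h j by simp
  finally show "(M *\<^sub>v z) $ j = 0\<^sub>v k $ j" using j by simp
qed (use M in simp)

lemma lin_indep_inj:
  fixes B :: "'a::field mat"
  assumes B: "B \<in> carrier_mat k m" and li: "rows_lin_indep m B"
    and a: "a \<in> carrier_vec k" and z: "transpose_mat B *\<^sub>v a = 0\<^sub>v m"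
  shows "a = 0\<^sub>v k"
proof (rule ccontr)
  interpret V: vec_space "TYPE('a)" m .
  assume "a \<noteq> 0\<^sub>v k"
  have BT: "transpose_mat B \<in> carrier_mat m k" using B by simp
  have "V.lin_dep (set (cols (transpose_mat B)))"
    by (rule V.lin_depI[OF BT a \<open>a \<noteq> 0\<^sub>v k\<close> z]) (use li in \<open>simp add: rows_lin_indep_def\<close>)
  thus False using li by (simp add: rows_lin_indep_def)
qed

lemma minus_zero_eq:
  fixes x y :: "'a::ab_group_add vec"
  assumes "x \<in> carrier_vec k" "y \<in> carrier_vec k" "x - y = 0\<^sub>v k" shows "x = y"
proof (rule eq_vecI)
  fix i assume "i < dim_vec y"
  hence i: "i < k" using assms by simp
  have "(x - y) $ i = 0" using assms(3) i by simp
  thus "x $ i = y $ i" using i assms(1,2) by simp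
qed (use assms in simp)

lemma mult_zero_vec[simp]: "dim_col M = m \<Longrightarrow> M *\<^sub>v 0\<^sub>v m = (0\<^sub>v (dim_row M) :: 'a::semiring_0 vec)"
  by (rule eq_vecI) auto

locale da =
  fixes Br Bt A :: "'a::{finite,field} mat" and n r t :: nat and C :: "'a vec set"
  assumes Br: "Br \<in> carrier_mat r n" and Bt: "Bt \<in> carrier_mat t n"
    and Br_li: "rows_lin_indep n Br" and Bt_li: "rows_lin_indep n Bt"
    and C_def: "C = rowsp n (Br @\<^sub>r Bt)"
    and direct: "rowsp n Br \<inter> rowsp n Bt = {0\<^sub>v n}"
    and Bt_dual: "rowsp n Bt \<subseteq> edual n C"
    and A: "A \<in> carrier_mat t t"
begin

lemma dims[simp]: "dim_row Br = r" "dim_col Br = n" "dim_row Bt = t" "dim_col Bt = n"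
  "dim_row A = t" "dim_col A = t"
  using Br Bt A by auto

abbreviation "BrT \<equiv> transpose_mat Br"
abbreviation "BtT \<equiv> transpose_mat Bt"

lemma BrT[simp]: "BrT \<in> carrier_mat n r" and BtT[simp]: "BtT \<in> carrier_mat n t"
  using Br Bt by auto

lemma BrTv[simp]: "b \<in> carrier_vec r \<Longrightarrow> BrT *\<^sub>v b \<in> carrier_vec n"
  and BtTv[simp]: "a \<in> carrier_vec t \<Longrightarrow> BtT *\<^sub>v a \<in> carrier_vec n"
  using Br Bt by auto

lemma C_eq: "C = {BrT *\<^sub>v b + BtT *\<^sub>v a | b a. b \<in> carrier_vec r \<and> a \<in> carrier_vec t}"
proof -
  have BB: "Br @\<^sub>r Bt \<in> carrier_mat (r + t) n" using Br Bt by auto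
  have "C = (\<lambda>w. transpose_mat (Br @\<^sub>r Bt) *\<^sub>v w) ` carrier_vec (r + t)"
    unfolding C_def by (rule rowsp_eq[OF BB])
  also have "\<dots> = {BrT *\<^sub>v b + BtT *\<^sub>v a | b a. b \<in> carrier_vec r \<and> a \<in> carrier_vec t}"
  proof (intro equalityI subsetI)
    fix v assume "v \<in> (\<lambda>w. transpose_mat (Br @\<^sub>r Bt) *\<^sub>v w) ` carrier_vec (r + t)"
    then obtain w where w: "w \<in> carrier_vec (r + t)" and v: "v = transpose_mat (Br @\<^sub>r Bt) *\<^sub>v w" by auto
    have "w = vec_first w r @\<^sub>v vec_last w t" using w by simp
    hence "v = BrT *\<^sub>v vec_first w r + BtT *\<^sub>v vec_last w t"
      using v append_rows_T_mult[OF Br Bt vec_first_carrier vec_last_carrier] by metis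
    thus "v \<in> {BrT *\<^sub>v b + BtT *\<^sub>v a | b a. b \<in> carrier_vec r \<and> a \<in> carrier_vec t}"
      using vec_first_carrier vec_last_carrier by blast
  next
    fix v assume "v \<in> {BrT *\<^sub>v b + BtT *\<^sub>v a | b a. b \<in> carrier_vec r \<and> a \<in> carrier_vec t}"
    then obtain b a where ba: "b \<in> carrier_vec r" "a \<in> carrier_vec t" and v: "v = BrT *\<^sub>v b + BtT *\<^sub>v a" by auto
    have "v = transpose_mat (Br @\<^sub>r Bt) *\<^sub>v (b @\<^sub>v a)" using append_rows_T_mult[OF Br Bt ba] v by simp
    moreover have "b @\<^sub>v a \<in> carrier_vec (r + t)" using ba by simp
    ultimately show "v \<in> (\<lambda>w. transpose_mat (Br @\<^sub>r Bt) *\<^sub>v w) ` carrier_vec (r + t)" by blast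
  qed
  finally show ?thesis .
qed

lemma C_carrier: "C \<subseteq> carrier_vec n" using C_eq by auto

lemma in_C: "b \<in> carrier_vec r \<Longrightarrow> a \<in> carrier_vec t \<Longrightarrow> BrT *\<^sub>v b + BtT *\<^sub>v a \<in> C"
  using C_eq by blast

lemma BrT_C: "b \<in> carrier_vec r \<Longrightarrow> BrT *\<^sub>v b \<in> C"
  using in_C[of b "0\<^sub>v t"] by simp

lemma BtT_C: "a \<in> carrier_vec t \<Longrightarrow> BtT *\<^sub>v a \<in> C"
  using in_C[of "0\<^sub>v r" a] by simp

lemma orthBt: "a \<in> carrier_vec t \<Longrightarrow> w \<in> C \<Longrightarrow> (BtT *\<^sub>v a) \<bullet> w = 0"
proof -
  assume a: "a \<in> carrier_vec t" and w: "w \<in> C"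
  have "BtT *\<^sub>v a \<in> rowsp n Bt" using rowsp_eq[OF Bt] a by auto
  hence "BtT *\<^sub>v a \<in> edual n C" using Bt_dual by auto
  thus ?thesis using w unfolding edual_def by auto
qed

lemma Bt_C: "w \<in> C \<Longrightarrow> Bt *\<^sub>v w = 0\<^sub>v t"
  by (rule zero_by_dual[OF Bt]) (use C_carrier orthBt in auto)

lemma Br_BtT: assumes a: "a \<in> carrier_vec t" shows "Br *\<^sub>v (BtT *\<^sub>v a) = 0\<^sub>v r"
proof (rule zero_by_dual[OF Br])
  fix b :: "'a vec" assume b: "b \<in> carrier_vec r"
  have "(BrT *\<^sub>v b) \<bullet> (BtT *\<^sub>v a) = (BtT *\<^sub>v a) \<bullet> (BrT *\<^sub>v b)"
    by (rule comm_scalar_prod[of _ n]) (use a b in auto)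
  also have "\<dots> = 0" using orthBt[OF a BrT_C[OF b]] .
  finally show "(BrT *\<^sub>v b) \<bullet> (BtT *\<^sub>v a) = 0" .
qed (use a in auto)

lemma ABtT: "a \<in> carrier_vec t \<Longrightarrow> transpose_mat (A * Bt) *\<^sub>v a = BtT *\<^sub>v (transpose_mat A *\<^sub>v a)"
  using transpose_mult[OF A Bt] A Bt by (simp add: assoc_mult_mat_vec)

lemma inj_C:
  fixes b b' a a' :: "'a vec"
  assumes b: "b \<in> carrier_vec r" "b' \<in> carrier_vec r" and a: "a \<in> carrier_vec t" "a' \<in> carrier_vec t"
    and eq: "BrT *\<^sub>v b + BtT *\<^sub>v a = BrT *\<^sub>v b' + BtT *\<^sub>v a'"
  shows "b = b' \<and> a = a'"
proof -
  have e: "BrT *\<^sub>v (b - b') = BtT *\<^sub>v (a' - a)"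
  proof (rule eq_vecI)
    fix i assume "i < dim_vec (BtT *\<^sub>v (a' - a))"
    hence i: "i < n" using Bt by simp
    have "(BrT *\<^sub>v b + BtT *\<^sub>v a) $ i = (BrT *\<^sub>v b' + BtT *\<^sub>v a') $ i" using eq by simp
    hence "(BrT *\<^sub>v b) $ i + (BtT *\<^sub>v a) $ i = (BrT *\<^sub>v b') $ i + (BtT *\<^sub>v a') $ i" using i a b Br Bt by simp
    moreover have "BrT *\<^sub>v (b - b') = BrT *\<^sub>v b - BrT *\<^sub>v b'"
      by (rule mult_minus_distrib_mat_vec[OF BrT b])
    moreover have "BtT *\<^sub>v (a' - a) = BtT *\<^sub>v a' - BtT *\<^sub>v a"
      by (rule mult_minus_distrib_mat_vec[OF BtT a(2) a(1)])
    ultimately show "(BrT *\<^sub>v (b - b')) $ i = (BtT *\<^sub>v (a' - a)) $ i" using i a b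
      by (simp add: algebra_simps)
  qed (use Br Bt in simp)
  have m1: "BrT *\<^sub>v (b - b') \<in> rowsp n Br" using rowsp_eq[OF Br] b by auto
  have m2: "BtT *\<^sub>v (a' - a) \<in> rowsp n Bt" using rowsp_eq[OF Bt] a by auto
  have z: "BrT *\<^sub>v (b - b') = 0\<^sub>v n" using direct m1 m2 e by auto
  hence "b - b' = 0\<^sub>v r" using lin_indep_inj[OF Br Br_li] b by auto
  hence 1: "b = b'" using minus_zero_eq b by blast
  have "BtT *\<^sub>v (a' - a) = 0\<^sub>v n" using z e by simp
  hence "a' - a = 0\<^sub>v t" using lin_indep_inj[OF Bt Bt_li] a by auto
  hence "a' = a" using minus_zero_eq a by blast
  thus ?thesis using 1 by simp
qed

end

lemma zero_mat_mult_vec[simp]: "v \<in> carrier_vec m \<Longrightarrow> 0\<^sub>m k m *\<^sub>v v = (0\<^sub>v k :: 'a::semiring_0 vec)"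
  by (rule eq_vecI) auto

context da begin

definition "PP a b c = (BtT *\<^sub>v a + BrT *\<^sub>v b) @\<^sub>v (transpose_mat (A * Bt) *\<^sub>v a + BrT *\<^sub>v c)"
definition "Kc = {b \<in> carrier_vec r. Br *\<^sub>v (BrT *\<^sub>v b) = 0\<^sub>v r}"

abbreviation "DD \<equiv> D_A n A Br Bt"

lemma ABtT_carrier[simp]: "transpose_mat (A * Bt) \<in> carrier_mat n t" using A Bt by auto

lemma mv_carrier[simp]: "transpose_mat (A * Bt) *\<^sub>v a \<in> carrier_vec n" "BrT *\<^sub>v b \<in> carrier_vec n"
  "BtT *\<^sub>v a \<in> carrier_vec n" "Br *\<^sub>v v \<in> carrier_vec r" "Bt *\<^sub>v v \<in> carrier_vec t"
  "(A * Bt) *\<^sub>v v \<in> carrier_vec t" "A *\<^sub>v a \<in> carrier_vec t"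
  by (rule carrier_vecI, simp)+

lemma PP_carrier: "a \<in> carrier_vec t \<Longrightarrow> b \<in> carrier_vec r \<Longrightarrow> c \<in> carrier_vec r \<Longrightarrow> PP a b c \<in> carrier_vec (2*n)"
  unfolding PP_def using A Bt by (auto simp: mult_2)

lemma PP_first[simp]: "a \<in> carrier_vec t \<Longrightarrow> b \<in> carrier_vec r \<Longrightarrow> vec_first (PP a b c) n = BtT *\<^sub>v a + BrT *\<^sub>v b"
  unfolding PP_def by simp

lemma PP_last[simp]: "a \<in> carrier_vec t \<Longrightarrow> c \<in> carrier_vec r \<Longrightarrow> vec_last (PP a b c) n = transpose_mat (A * Bt) *\<^sub>v a + BrT *\<^sub>v c"
  unfolding PP_def using A Bt by (simp del: transpose_mult)

lemma DA_carrier: "DA_gen A Br Bt \<in> carrier_mat (t + (r + r)) (2*n)"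
  unfolding DA_gen_def using A Br Bt by (auto simp: mult_2)

lemma DA_mult:
  assumes a: "a \<in> carrier_vec t" and b: "b \<in> carrier_vec r" and c: "c \<in> carrier_vec r"
  shows "transpose_mat (DA_gen A Br Bt) *\<^sub>v (a @\<^sub>v (b @\<^sub>v c)) = PP a b c"
proof -
  have c1: "Br @\<^sub>r 0\<^sub>m r n \<in> carrier_mat (r + r) n" and c2: "0\<^sub>m r n @\<^sub>r Br \<in> carrier_mat (r + r) n"
    using Br by auto
  have ABt: "A * Bt \<in> carrier_mat t n" using A Bt by auto
  have "transpose_mat (DA_gen A Br Bt) = four_block_mat BtT (transpose_mat (Br @\<^sub>r 0\<^sub>m r n))
      (transpose_mat (A * Bt)) (transpose_mat (0\<^sub>m r n @\<^sub>r Br))"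
    unfolding DA_gen_def dims by (rule transpose_four_block_mat[OF Bt ABt c1 c2])
  hence "transpose_mat (DA_gen A Br Bt) *\<^sub>v (a @\<^sub>v (b @\<^sub>v c)) =
     (BtT *\<^sub>v a + transpose_mat (Br @\<^sub>r 0\<^sub>m r n) *\<^sub>v (b @\<^sub>v c)) @\<^sub>v
     (transpose_mat (A * Bt) *\<^sub>v a + transpose_mat (0\<^sub>m r n @\<^sub>r Br) *\<^sub>v (b @\<^sub>v c))"
    using four_block_mat_mult_vec[of BtT n t "transpose_mat (Br @\<^sub>r 0\<^sub>m r n)" "r + r"
        "transpose_mat (A * Bt)" n "transpose_mat (0\<^sub>m r n @\<^sub>r Br)" a "b @\<^sub>v c"] c1 c2 a b c Bt A
    by auto
  also have "transpose_mat (Br @\<^sub>r 0\<^sub>m r n) *\<^sub>v (b @\<^sub>v c) = BrT *\<^sub>v b"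
    using append_rows_T_mult[OF Br _ b c, of "0\<^sub>m r n"] b c by simp
  also have "transpose_mat (0\<^sub>m r n @\<^sub>r Br) *\<^sub>v (b @\<^sub>v c) = BrT *\<^sub>v c"
    using append_rows_T_mult[OF _ Br b c, of "0\<^sub>m r n"] b c by simp
  finally show ?thesis unfolding PP_def .
qed

lemma D_eq: "DD = {PP a b c | a b c. a \<in> carrier_vec t \<and> b \<in> carrier_vec r \<and> c \<in> carrier_vec r}"
proof -
  have "DD = (\<lambda>w. transpose_mat (DA_gen A Br Bt) *\<^sub>v w) ` carrier_vec (t + (r + r))"
    unfolding D_A_def by (rule rowsp_eq[OF DA_carrier])
  also have "\<dots> = {PP a b c | a b c. a \<in> carrier_vec t \<and> b \<in> carrier_vec r \<and> c \<in> carrier_vec r}"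
  proof (intro equalityI subsetI)
    fix v assume "v \<in> (\<lambda>w. transpose_mat (DA_gen A Br Bt) *\<^sub>v w) ` carrier_vec (t + (r + r))"
    then obtain w where w: "w \<in> carrier_vec (t + (r + r))" and v: "v = transpose_mat (DA_gen A Br Bt) *\<^sub>v w" by auto
    define a where "a = vec_first w t"
    define bc where "bc = vec_last w (r + r)"
    have "w = a @\<^sub>v (vec_first bc r @\<^sub>v vec_last bc r)"
      using w unfolding a_def bc_def by simp
    hence "v = PP a (vec_first bc r) (vec_last bc r)"
      using v DA_mult[of a "vec_first bc r" "vec_last bc r"] unfolding a_def by simp
    moreover have "a \<in> carrier_vec t" "vec_first bc r \<in> carrier_vec r" "vec_last bc r \<in> carrier_vec r"
      unfolding a_def by auto
    ultimately show "v \<in> {PP a b c | a b c. a \<in> carrier_vec t \<and> b \<in> carrier_vec r \<and> c \<in> carrier_vec r}"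
      by blast
  next
    fix v assume "v \<in> {PP a b c | a b c. a \<in> carrier_vec t \<and> b \<in> carrier_vec r \<and> c \<in> carrier_vec r}"
    then obtain a b c where abc: "a \<in> carrier_vec t" "b \<in> carrier_vec r" "c \<in> carrier_vec r" and v: "v = PP a b c" by auto
    have "v = transpose_mat (DA_gen A Br Bt) *\<^sub>v (a @\<^sub>v (b @\<^sub>v c))" using DA_mult[OF abc] v by simp
    moreover have "a @\<^sub>v (b @\<^sub>v c) \<in> carrier_vec (t + (r + r))" using abc by simp
    ultimately show "v \<in> (\<lambda>w. transpose_mat (DA_gen A Br Bt) *\<^sub>v w) ` carrier_vec (t + (r + r))" by blast
  qed
  finally show ?thesis .
qed

lemma PP_in_D: "a \<in> carrier_vec t \<Longrightarrow> b \<in> carrier_vec r \<Longrightarrow> c \<in> carrier_vec r \<Longrightarrow> PP a b c \<in> DD"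
  using D_eq by blast

lemma scal_T: fixes M :: "'a mat" shows "M \<in> carrier_mat k m \<Longrightarrow> x \<in> carrier_vec m \<Longrightarrow> a \<in> carrier_vec k \<Longrightarrow>
   x \<bullet> (transpose_mat M *\<^sub>v a) = a \<bullet> (M *\<^sub>v x)"
proof -
  assume M: "M \<in> carrier_mat k m" and x: "x \<in> carrier_vec m" and a: "a \<in> carrier_vec k"
  have "x \<bullet> (transpose_mat M *\<^sub>v a) = (transpose_mat M *\<^sub>v a) \<bullet> x"
    by (rule comm_scalar_prod[of _ m]) (use M x a in auto)
  also have "\<dots> = a \<bullet> (M *\<^sub>v x)" by (rule transpose_vec_mult_scalar[OF M x a])
  finally show ?thesis .
qed

lemma sprod_PP:
  assumes u: "u \<in> carrier_vec (2*n)" and a: "a \<in> carrier_vec t" and b: "b \<in> carrier_vec r" and c: "c \<in> carrier_vec r"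
  shows "sprod n u (PP a b c) = a \<bullet> ((A * Bt) *\<^sub>v vec_first u n) + c \<bullet> (Br *\<^sub>v vec_first u n)
     - (a \<bullet> (Bt *\<^sub>v vec_last u n) + b \<bullet> (Br *\<^sub>v vec_last u n))"
proof -
  let ?x = "vec_first u n" and ?y = "vec_last u n"
  have ABt: "A * Bt \<in> carrier_mat t n" using A Bt by auto
  have "?x \<bullet> (transpose_mat (A * Bt) *\<^sub>v a + BrT *\<^sub>v c) = ?x \<bullet> (transpose_mat (A * Bt) *\<^sub>v a) + ?x \<bullet> (BrT *\<^sub>v c)"
    by (rule scalar_prod_add_distrib[of _ n]) (use a c in auto)
  also have "\<dots> = a \<bullet> ((A * Bt) *\<^sub>v ?x) + c \<bullet> (Br *\<^sub>v ?x)"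
    using scal_T[OF ABt _ a, of ?x] scal_T[OF Br _ c, of ?x] by simp
  finally have 1: "?x \<bullet> (transpose_mat (A * Bt) *\<^sub>v a + BrT *\<^sub>v c) = a \<bullet> ((A * Bt) *\<^sub>v ?x) + c \<bullet> (Br *\<^sub>v ?x)" .
  have "(BtT *\<^sub>v a + BrT *\<^sub>v b) \<bullet> ?y = (BtT *\<^sub>v a) \<bullet> ?y + (BrT *\<^sub>v b) \<bullet> ?y"
    by (rule add_scalar_prod_distrib[of _ n]) (use a b in auto)
  also have "\<dots> = a \<bullet> (Bt *\<^sub>v ?y) + b \<bullet> (Br *\<^sub>v ?y)"
    using transpose_vec_mult_scalar[OF Bt _ a, of ?y] transpose_vec_mult_scalar[OF Br _ b, of ?y] by simp
  finally have 2: "(BtT *\<^sub>v a + BrT *\<^sub>v b) \<bullet> ?y = a \<bullet> (Bt *\<^sub>v ?y) + b \<bullet> (Br *\<^sub>v ?y)" .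
  show ?thesis unfolding sprod_def using 1 2 a b c by simp
qed

lemma sdual_char:
  "u \<in> sdual n DD \<longleftrightarrow> u \<in> carrier_vec (2*n) \<and> Br *\<^sub>v vec_first u n = 0\<^sub>v r \<and> Br *\<^sub>v vec_last u n = 0\<^sub>v r
     \<and> (A * Bt) *\<^sub>v vec_first u n = Bt *\<^sub>v vec_last u n"
proof
  let ?x = "vec_first u n" and ?y = "vec_last u n"
  assume "u \<in> sdual n DD"
  hence u: "u \<in> carrier_vec (2*n)" and h: "\<And>v. v \<in> DD \<Longrightarrow> sprod n u v = 0" unfolding sdual_def by auto
  have z: "0\<^sub>v t \<in> carrier_vec t" "0\<^sub>v r \<in> carrier_vec r" by auto
  have z1: "0\<^sub>v t \<bullet> ((A * Bt) *\<^sub>v ?x) = 0" "0\<^sub>v t \<bullet> (Bt *\<^sub>v ?y) = 0" "0\<^sub>v r \<bullet> (Br *\<^sub>v ?y) = 0"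
     "0\<^sub>v r \<bullet> (Br *\<^sub>v ?x) = 0"
    by (rule scalar_prod_left_zero, rule mv_carrier)+
  have "Br *\<^sub>v ?x = 0\<^sub>v r"
  proof (rule eq_vecI)
    fix j assume "j < dim_vec (0\<^sub>v r :: 'a vec)" hence j: "j < r" by simp
    have uj: "unit_vec r j \<in> carrier_vec r" by simp
    have "sprod n u (PP (0\<^sub>v t) (0\<^sub>v r) (unit_vec r j)) = 0" using h PP_in_D[OF z uj] by blast
    hence "unit_vec r j \<bullet> (Br *\<^sub>v ?x) = 0" unfolding sprod_PP[OF u z uj] z1 by simp
    hence "(Br *\<^sub>v ?x) $ j = 0" using scalar_prod_left_unit[OF mv_carrier(4) j] by simp
    thus "(Br *\<^sub>v ?x) $ j = 0\<^sub>v r $ j" using j by simp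
  qed simp
  moreover have "Br *\<^sub>v ?y = 0\<^sub>v r"
  proof (rule eq_vecI)
    fix j assume "j < dim_vec (0\<^sub>v r :: 'a vec)" hence j: "j < r" by simp
    have uj: "unit_vec r j \<in> carrier_vec r" by simp
    have "sprod n u (PP (0\<^sub>v t) (unit_vec r j) (0\<^sub>v r)) = 0" using h PP_in_D[OF z(1) uj z(2)] by blast
    hence "unit_vec r j \<bullet> (Br *\<^sub>v ?y) = 0" unfolding sprod_PP[OF u z(1) uj z(2)] z1 by simp
    hence "(Br *\<^sub>v ?y) $ j = 0" using scalar_prod_left_unit[OF mv_carrier(4) j] by simp
    thus "(Br *\<^sub>v ?y) $ j = 0\<^sub>v r $ j" using j by simp
  qed simp
  moreover have "(A * Bt) *\<^sub>v ?x = Bt *\<^sub>v ?y"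
  proof (rule eq_vecI)
    fix j assume "j < dim_vec (Bt *\<^sub>v ?y)" hence j: "j < t" by simp
    have uj: "unit_vec t j \<in> carrier_vec t" by simp
    have "sprod n u (PP (unit_vec t j) (0\<^sub>v r) (0\<^sub>v r)) = 0" using h PP_in_D[OF uj z(2) z(2)] by blast
    hence "unit_vec t j \<bullet> ((A * Bt) *\<^sub>v ?x) = unit_vec t j \<bullet> (Bt *\<^sub>v ?y)"
      unfolding sprod_PP[OF u uj z(2) z(2)] z1 by simp
    thus "((A * Bt) *\<^sub>v ?x) $ j = (Bt *\<^sub>v ?y) $ j"
      using scalar_prod_left_unit[OF mv_carrier(6) j] scalar_prod_left_unit[OF mv_carrier(5) j] by metis
  qed (use A Bt in simp)
  ultimately show "u \<in> carrier_vec (2*n) \<and> Br *\<^sub>v ?x = 0\<^sub>v r \<and> Br *\<^sub>v ?y = 0\<^sub>v r \<and> (A * Bt) *\<^sub>v ?x = Bt *\<^sub>v ?y"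
    using u by blast
next
  assume h: "u \<in> carrier_vec (2*n) \<and> Br *\<^sub>v vec_first u n = 0\<^sub>v r \<and> Br *\<^sub>v vec_last u n = 0\<^sub>v r
     \<and> (A * Bt) *\<^sub>v vec_first u n = Bt *\<^sub>v vec_last u n"
  show "u \<in> sdual n DD" unfolding sdual_def
  proof (intro CollectI conjI ballI)
    show "u \<in> carrier_vec (2*n)" using h by simp
    fix v assume "v \<in> DD"
    then obtain a b c where abc: "a \<in> carrier_vec t" "b \<in> carrier_vec r" "c \<in> carrier_vec r" and v: "v = PP a b c"
      using D_eq by auto
    have "sprod n u v = a \<bullet> ((A * Bt) *\<^sub>v vec_first u n) + c \<bullet> (Br *\<^sub>v vec_first u n)
     - (a \<bullet> (Bt *\<^sub>v vec_last u n) + b \<bullet> (Br *\<^sub>v vec_last u n))"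
      unfolding v by (rule sprod_PP[OF _ abc]) (use h in blast)
    also have "\<dots> = 0" using h by (simp del: assoc_mult_mat_vec) (use abc in simp)
    finally show "sprod n u v = 0" .
  qed
qed

end

lemma add_cancel_vec:
  fixes u v w :: "'a::ab_group_add vec"
  assumes "u \<in> carrier_vec k" "v \<in> carrier_vec k" "w \<in> carrier_vec k" "u + v = u + w"
  shows "v = w"
proof (rule eq_vecI)
  fix i assume "i < dim_vec w" hence i: "i < k" using assms by simp
  have "(u + v) $ i = (u + w) $ i" using assms(4) by simp
  thus "v $ i = w $ i" using i assms(1-3) by simp
qed (use assms in simp)

context da begin

lemma PP_sdual:
  assumes a: "a \<in> carrier_vec t" and b: "b \<in> carrier_vec r" and c: "c \<in> carrier_vec r"
  shows "PP a b c \<in> sdual n DD \<longleftrightarrow> b \<in> Kc \<and> c \<in> Kc"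
proof -
  let ?x = "BtT *\<^sub>v a + BrT *\<^sub>v b" and ?y = "transpose_mat (A * Bt) *\<^sub>v a + BrT *\<^sub>v c"
  have y: "?y = BrT *\<^sub>v c + BtT *\<^sub>v (transpose_mat A *\<^sub>v a)"
    using ABtT[OF a] by (simp add: comm_add_vec[of _ n])
  have xC: "?x \<in> C" using in_C[OF b a] comm_add_vec[of "BtT *\<^sub>v a" n "BrT *\<^sub>v b"] by simp
  have yC: "?y \<in> C" unfolding y by (rule in_C[OF c]) (use A a in simp)
  have Brx: "Br *\<^sub>v ?x = Br *\<^sub>v (BrT *\<^sub>v b)"
    using mult_add_distrib_mat_vec[OF Br mv_carrier(3) mv_carrier(2), of a b] Br_BtT[OF a] by simp
  have Bry: "Br *\<^sub>v ?y = Br *\<^sub>v (BrT *\<^sub>v c)"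
    unfolding y using mult_add_distrib_mat_vec[OF Br mv_carrier(2) mv_carrier(3), of c "transpose_mat A *\<^sub>v a"]
      Br_BtT[of "transpose_mat A *\<^sub>v a"] A a by simp
  have ABx: "(A * Bt) *\<^sub>v ?x = 0\<^sub>v t" using Bt_C[OF xC] A Bt by simp
  have Bty: "Bt *\<^sub>v ?y = 0\<^sub>v t" using Bt_C[OF yC] .
  have PPc: "PP a b c \<in> carrier_vec (2*n)" using PP_carrier[OF a b c] .
  show ?thesis unfolding sdual_char PP_first[OF a b] PP_last[OF a c] Brx Bry ABx Bty Kc_def
    using PPc b c by simp
qed

lemma hull_eq: "DD \<inter> sdual n DD = {PP a b c | a b c. a \<in> carrier_vec t \<and> b \<in> Kc \<and> c \<in> Kc}"
proof (intro equalityI subsetI)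
  fix u assume "u \<in> DD \<inter> sdual n DD"
  then obtain a b c where abc: "a \<in> carrier_vec t" "b \<in> carrier_vec r" "c \<in> carrier_vec r" and u: "u = PP a b c"
    and s: "u \<in> sdual n DD" using D_eq by auto
  have "b \<in> Kc \<and> c \<in> Kc" using PP_sdual[OF abc] s u by simp
  thus "u \<in> {PP a b c | a b c. a \<in> carrier_vec t \<and> b \<in> Kc \<and> c \<in> Kc}" using abc u by blast
next
  fix u assume "u \<in> {PP a b c | a b c. a \<in> carrier_vec t \<and> b \<in> Kc \<and> c \<in> Kc}"
  then obtain a b c where abc: "a \<in> carrier_vec t" "b \<in> Kc" "c \<in> Kc" and u: "u = PP a b c" by auto
  have bc: "b \<in> carrier_vec r" "c \<in> carrier_vec r" using abc Kc_def by auto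
  show "u \<in> DD \<inter> sdual n DD" using PP_in_D[OF abc(1) bc] PP_sdual[OF abc(1) bc] abc u by simp
qed

lemma C_edual_char:
  assumes b: "b \<in> carrier_vec r" and a: "a \<in> carrier_vec t"
  shows "BrT *\<^sub>v b + BtT *\<^sub>v a \<in> edual n C \<longleftrightarrow> b \<in> Kc"
proof
  assume e: "BrT *\<^sub>v b + BtT *\<^sub>v a \<in> edual n C"
  have "Br *\<^sub>v (BrT *\<^sub>v b) = 0\<^sub>v r"
  proof (rule zero_by_dual[OF Br])
    fix b' :: "'a vec" assume b': "b' \<in> carrier_vec r"
    have "(BrT *\<^sub>v b + BtT *\<^sub>v a) \<bullet> (BrT *\<^sub>v b') = 0" using e BrT_C[OF b'] unfolding edual_def by auto
    moreover have "(BrT *\<^sub>v b + BtT *\<^sub>v a) \<bullet> (BrT *\<^sub>v b') = (BrT *\<^sub>v b) \<bullet> (BrT *\<^sub>v b') + (BtT *\<^sub>v a) \<bullet> (BrT *\<^sub>v b')"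
      by (rule add_scalar_prod_distrib[of _ n]) simp_all
    moreover have "(BtT *\<^sub>v a) \<bullet> (BrT *\<^sub>v b') = 0" using orthBt[OF a BrT_C[OF b']] .
    moreover have "(BrT *\<^sub>v b') \<bullet> (BrT *\<^sub>v b) = (BrT *\<^sub>v b) \<bullet> (BrT *\<^sub>v b')"
      by (rule comm_scalar_prod[of _ n]) simp_all
    ultimately show "(BrT *\<^sub>v b') \<bullet> (BrT *\<^sub>v b) = 0" by simp
  qed simp
  thus "b \<in> Kc" using b Kc_def by simp
next
  assume k: "b \<in> Kc"
  show "BrT *\<^sub>v b + BtT *\<^sub>v a \<in> edual n C" unfolding edual_def
  proof (intro CollectI conjI ballI)
    show "BrT *\<^sub>v b + BtT *\<^sub>v a \<in> carrier_vec n" by simp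
    fix y assume "y \<in> C"
    then obtain b' a' where b'a': "b' \<in> carrier_vec r" "a' \<in> carrier_vec t" and y: "y = BrT *\<^sub>v b' + BtT *\<^sub>v a'"
      using C_eq by auto
    have yc: "y \<in> carrier_vec n" using y by simp
    have "(BrT *\<^sub>v b + BtT *\<^sub>v a) \<bullet> y = (BrT *\<^sub>v b) \<bullet> y + (BtT *\<^sub>v a) \<bullet> y"
      by (rule add_scalar_prod_distrib[of _ n]) (simp_all add: yc)
    also have "(BtT *\<^sub>v a) \<bullet> y = 0" using orthBt[OF a \<open>y \<in> C\<close>] .
    also have "(BrT *\<^sub>v b) \<bullet> y = (BrT *\<^sub>v b) \<bullet> (BrT *\<^sub>v b') + (BrT *\<^sub>v b) \<bullet> (BtT *\<^sub>v a')"
      unfolding y by (rule scalar_prod_add_distrib[of _ n]) simp_all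
    also have "(BrT *\<^sub>v b) \<bullet> (BtT *\<^sub>v a') = 0"
      using orthBt[OF b'a'(2) BrT_C[OF b]] comm_scalar_prod[of "BrT *\<^sub>v b" n "BtT *\<^sub>v a'"] by simp
    also have "(BrT *\<^sub>v b) \<bullet> (BrT *\<^sub>v b') = b' \<bullet> (Br *\<^sub>v (BrT *\<^sub>v b))"
      by (rule scal_T[OF Br _ b'a'(1)]) simp
    also have "\<dots> = 0" using k b'a'(1) unfolding Kc_def by simp
    finally show "(BrT *\<^sub>v b + BtT *\<^sub>v a) \<bullet> y = 0" by simp
  qed
qed

lemma C_edual_eq: "C \<inter> edual n C = {BrT *\<^sub>v b + BtT *\<^sub>v a | b a. b \<in> Kc \<and> a \<in> carrier_vec t}"
proof (intro equalityI subsetI)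
  fix w assume "w \<in> C \<inter> edual n C"
  then obtain b a where ba: "b \<in> carrier_vec r" "a \<in> carrier_vec t" and w: "w = BrT *\<^sub>v b + BtT *\<^sub>v a"
    and e: "w \<in> edual n C" using C_eq by auto
  have "b \<in> Kc" using C_edual_char[OF ba] e w by simp
  thus "w \<in> {BrT *\<^sub>v b + BtT *\<^sub>v a | b a. b \<in> Kc \<and> a \<in> carrier_vec t}" using ba w by blast
next
  fix w assume "w \<in> {BrT *\<^sub>v b + BtT *\<^sub>v a | b a. b \<in> Kc \<and> a \<in> carrier_vec t}"
  then obtain b a where ba: "b \<in> Kc" "a \<in> carrier_vec t" and w: "w = BrT *\<^sub>v b + BtT *\<^sub>v a" by auto
  have b: "b \<in> carrier_vec r" using ba Kc_def by auto
  show "w \<in> C \<inter> edual n C" using in_C[OF b ba(2)] C_edual_char[OF b ba(2)] ba w by simp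
qed

lemma inj_PP: "inj_on (\<lambda>(a, b, c). PP a b c) (carrier_vec t \<times> carrier_vec r \<times> carrier_vec r)"
proof (rule inj_onI)
  fix x y assume x: "x \<in> carrier_vec t \<times> carrier_vec r \<times> carrier_vec r"
    and y: "y \<in> carrier_vec t \<times> carrier_vec r \<times> carrier_vec r"
    and eq0: "(\<lambda>(a, b, c). PP a b c) x = (\<lambda>(a, b, c). PP a b c) y"
  obtain a b c where xd: "x = (a, b, c)" by (cases x) auto
  obtain a' b' c' where yd: "y = (a', b', c')" by (cases y) auto
  have a: "a \<in> carrier_vec t" "a' \<in> carrier_vec t" and b: "b \<in> carrier_vec r" "b' \<in> carrier_vec r"
    and c: "c \<in> carrier_vec r" "c' \<in> carrier_vec r" using x y xd yd by auto
  have eq: "PP a b c = PP a' b' c'" using eq0 xd yd by simp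
  have "vec_first (PP a b c) n = vec_first (PP a' b' c') n" using eq by simp
  hence "BtT *\<^sub>v a + BrT *\<^sub>v b = BtT *\<^sub>v a' + BrT *\<^sub>v b'" using a b by simp
  hence "BrT *\<^sub>v b + BtT *\<^sub>v a = BrT *\<^sub>v b' + BtT *\<^sub>v a'"
    using comm_add_vec[of "BtT *\<^sub>v a" n "BrT *\<^sub>v b"] comm_add_vec[of "BtT *\<^sub>v a'" n "BrT *\<^sub>v b'"] by simp
  hence ab: "b = b' \<and> a = a'" using inj_C[OF b a] by blast
  have "vec_last (PP a b c) n = vec_last (PP a' b' c') n" using eq by simp
  hence "transpose_mat (A * Bt) *\<^sub>v a + BrT *\<^sub>v c = transpose_mat (A * Bt) *\<^sub>v a + BrT *\<^sub>v c'" using a c ab by simp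
  hence "BrT *\<^sub>v c = BrT *\<^sub>v c'" by (rule add_cancel_vec[where k = n, rotated 3]) simp_all
  hence "BrT *\<^sub>v c + BtT *\<^sub>v 0\<^sub>v t = BrT *\<^sub>v c' + BtT *\<^sub>v 0\<^sub>v t" by simp
  hence "c = c'" using inj_C[OF c, of "0\<^sub>v t" "0\<^sub>v t"] by simp
  thus "x = y" using ab xd yd by simp
qed

lemma inj_Cmap: "inj_on (\<lambda>(b, a). BrT *\<^sub>v b + BtT *\<^sub>v a) (carrier_vec r \<times> carrier_vec t)"
proof (rule inj_onI)
  fix x y assume x: "x \<in> carrier_vec r \<times> carrier_vec t" and y: "y \<in> carrier_vec r \<times> carrier_vec t"
    and eq0: "(\<lambda>(b, a). BrT *\<^sub>v b + BtT *\<^sub>v a) x = (\<lambda>(b, a). BrT *\<^sub>v b + BtT *\<^sub>v a) y"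
  obtain b a where xd: "x = (b, a)" by (cases x) auto
  obtain b' a' where yd: "y = (b', a')" by (cases y) auto
  show "x = y" using inj_C[of b b' a a'] x y eq0 xd yd by auto
qed

end

lemma setb3: "{f a b c | a b c. a \<in> X \<and> b \<in> Y \<and> c \<in> Z} = (\<lambda>(a, b, c). f a b c) ` (X \<times> Y \<times> Z)"
proof (intro equalityI subsetI)
  fix v assume "v \<in> {f a b c | a b c. a \<in> X \<and> b \<in> Y \<and> c \<in> Z}"
  then obtain a b c where v: "v = f a b c" "a \<in> X" "b \<in> Y" "c \<in> Z" by blast
  thus "v \<in> (\<lambda>(a, b, c). f a b c) ` (X \<times> Y \<times> Z)" by (intro image_eqI[of _ _ "(a, b, c)"]) auto
next
  fix v assume "v \<in> (\<lambda>(a, b, c). f a b c) ` (X \<times> Y \<times> Z)"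
  then obtain x where x: "x \<in> X \<times> Y \<times> Z" "v = (\<lambda>(a, b, c). f a b c) x" by blast
  then obtain a b c where "x = (a, b, c)" by (cases x) auto
  thus "v \<in> {f a b c | a b c. a \<in> X \<and> b \<in> Y \<and> c \<in> Z}" using x by auto
qed

lemma setb2: "{f a b | a b. a \<in> X \<and> b \<in> Y} = (\<lambda>(a, b). f a b) ` (X \<times> Y)"
proof (intro equalityI subsetI)
  fix v assume "v \<in> {f a b | a b. a \<in> X \<and> b \<in> Y}"
  then obtain a b where v: "v = f a b" "a \<in> X" "b \<in> Y" by blast
  thus "v \<in> (\<lambda>(a, b). f a b) ` (X \<times> Y)" by (intro image_eqI[of _ _ "(a, b)"]) auto
next
  fix v assume "v \<in> (\<lambda>(a, b). f a b) ` (X \<times> Y)"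
  then obtain x where x: "x \<in> X \<times> Y" "v = (\<lambda>(a, b). f a b) x" by blast
  then obtain a b where "x = (a, b)" by (cases x) auto
  thus "v \<in> {f a b | a b. a \<in> X \<and> b \<in> Y}" using x by auto
qed

lemma smult_0v[simp]: "(c::'a::semiring_0) \<cdot>\<^sub>v 0\<^sub>v k = 0\<^sub>v k"
  by (rule eq_vecI) auto

lemma edual_closed:
  fixes V :: "'a::field vec set"
  assumes V: "V \<subseteq> carrier_vec m"
  shows "edual m V \<subseteq> carrier_vec m" "0\<^sub>v m \<in> edual m V"
    "\<And>v w. v \<in> edual m V \<Longrightarrow> w \<in> edual m V \<Longrightarrow> v + w \<in> edual m V"
    "\<And>c v. v \<in> edual m V \<Longrightarrow> c \<cdot>\<^sub>v v \<in> edual m V"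
proof -
  show "edual m V \<subseteq> carrier_vec m" unfolding edual_def by auto
  show "0\<^sub>v m \<in> edual m V" unfolding edual_def using V by auto
  fix v w c assume v: "v \<in> edual m V"
  show "c \<cdot>\<^sub>v v \<in> edual m V" using v V unfolding edual_def by (auto simp: subset_iff)
  assume w: "w \<in> edual m V"
  show "v + w \<in> edual m V" using v w V unfolding edual_def by (auto simp: subset_iff add_scalar_prod_distrib[of _ m])
qed

lemma vec_first_add: "u \<in> carrier_vec (2*n) \<Longrightarrow> u' \<in> carrier_vec (2*n) \<Longrightarrow> vec_first (u + u') n = vec_first u n + vec_first u' n"
  by (rule eq_vecI) (auto simp: vec_first_def)
lemma vec_last_add: "u \<in> carrier_vec (2*n) \<Longrightarrow> u' \<in> carrier_vec (2*n) \<Longrightarrow> vec_last (u + u') n = vec_last u n + vec_last u' n"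
  by (rule eq_vecI) (auto simp: vec_last_def)
lemma vec_first_smult: "u \<in> carrier_vec (2*n) \<Longrightarrow> vec_first (c \<cdot>\<^sub>v u) n = c \<cdot>\<^sub>v vec_first u n"
  by (rule eq_vecI) (auto simp: vec_first_def)
lemma vec_last_smult: "u \<in> carrier_vec (2*n) \<Longrightarrow> vec_last (c \<cdot>\<^sub>v u) n = c \<cdot>\<^sub>v vec_last u n"
  by (rule eq_vecI) (auto simp: vec_last_def)
lemma vec_first_zero: "vec_first (0\<^sub>v (2*n)) n = 0\<^sub>v n"
  by (rule eq_vecI) (auto simp: vec_first_def)
lemma vec_last_zero: "vec_last (0\<^sub>v (2*n)) n = 0\<^sub>v n"
  by (rule eq_vecI) (auto simp: vec_last_def)

lemma sdual_closed:
  fixes D :: "'a::comm_ring vec set"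
  shows "sdual n D \<subseteq> carrier_vec (2*n)" "0\<^sub>v (2*n) \<in> sdual n D"
    "\<And>v w. v \<in> sdual n D \<Longrightarrow> w \<in> sdual n D \<Longrightarrow> v + w \<in> sdual n D"
    "\<And>c v. v \<in> sdual n D \<Longrightarrow> c \<cdot>\<^sub>v v \<in> sdual n D"
proof -
  show "sdual n D \<subseteq> carrier_vec (2*n)" unfolding sdual_def by auto
  show "0\<^sub>v (2*n) \<in> sdual n D" unfolding sdual_def sprod_def by (auto simp: vec_first_zero vec_last_zero)
  fix u u' c assume u: "u \<in> sdual n D"
  show "c \<cdot>\<^sub>v u \<in> sdual n D" unfolding sdual_def
  proof (intro CollectI conjI ballI)
    show "c \<cdot>\<^sub>v u \<in> carrier_vec (2*n)" using u unfolding sdual_def by auto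
    fix v assume v: "v \<in> D"
    have "sprod n u v = 0" and uc: "u \<in> carrier_vec (2*n)" using u v unfolding sdual_def by auto
    thus "sprod n (c \<cdot>\<^sub>v u) v = 0" unfolding sprod_def vec_first_smult[OF uc] vec_last_smult[OF uc]
      by (simp add: right_diff_distrib[symmetric])
  qed
  assume u': "u' \<in> sdual n D"
  show "u + u' \<in> sdual n D" unfolding sdual_def
  proof (intro CollectI conjI ballI)
    have uc: "u \<in> carrier_vec (2*n)" "u' \<in> carrier_vec (2*n)" using u u' unfolding sdual_def by auto
    thus "u + u' \<in> carrier_vec (2*n)" by auto
    fix v assume v: "v \<in> D"
    have "sprod n u v = 0" "sprod n u' v = 0" using u u' v unfolding sdual_def by auto
    thus "sprod n (u + u') v = 0" unfolding sprod_def vec_first_add[OF uc] vec_last_add[OF uc]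
      by (simp add: add_scalar_prod_distrib[of _ n] scalar_prod_add_distrib[of _ n] algebra_simps)
  qed
qed

context da begin

lemma Kc_sub: "Kc \<subseteq> carrier_vec r" unfolding Kc_def by auto

lemma Kc_closed: "0\<^sub>v r \<in> Kc" "\<And>v w. v \<in> Kc \<Longrightarrow> w \<in> Kc \<Longrightarrow> v + w \<in> Kc"
    "\<And>c v. v \<in> Kc \<Longrightarrow> c \<cdot>\<^sub>v v \<in> Kc"
proof -
  show "0\<^sub>v r \<in> Kc" unfolding Kc_def by simp
  fix v w c assume v: "v \<in> Kc"
  hence vc: "v \<in> carrier_vec r" and v0: "Br *\<^sub>v (BrT *\<^sub>v v) = 0\<^sub>v r" unfolding Kc_def by auto
  have "Br *\<^sub>v (BrT *\<^sub>v (c \<cdot>\<^sub>v v)) = c \<cdot>\<^sub>v (Br *\<^sub>v (BrT *\<^sub>v v))"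
    using mult_mat_vec[OF BrT vc] mult_mat_vec[OF Br mv_carrier(2)] by simp
  thus "c \<cdot>\<^sub>v v \<in> Kc" using v0 vc unfolding Kc_def by simp
  assume w: "w \<in> Kc"
  hence wc: "w \<in> carrier_vec r" and w0: "Br *\<^sub>v (BrT *\<^sub>v w) = 0\<^sub>v r" unfolding Kc_def by auto
  have "Br *\<^sub>v (BrT *\<^sub>v (v + w)) = Br *\<^sub>v (BrT *\<^sub>v v) + Br *\<^sub>v (BrT *\<^sub>v w)"
    using mult_add_distrib_mat_vec[OF BrT vc wc] mult_add_distrib_mat_vec[OF Br mv_carrier(2) mv_carrier(2)] by simp
  thus "v + w \<in> Kc" using v0 w0 vc wc unfolding Kc_def by simp
qed


lemma q_gt1: "1 < card (UNIV :: 'a set)"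
proof -
  have "{0, 1} \<subseteq> (UNIV :: 'a set)" by simp
  hence "card {0::'a, 1} \<le> card (UNIV :: 'a set)" by (rule card_mono[OF finite_UNIV])
  thus ?thesis by simp
qed

lemma card_DD: "card DD = card (UNIV :: 'a set) ^ t * (card (UNIV :: 'a set) ^ r * card (UNIV :: 'a set) ^ r)"
proof -
  have "DD = (\<lambda>(a, b, c). PP a b c) ` (carrier_vec t \<times> carrier_vec r \<times> carrier_vec r)"
    unfolding D_eq by (rule setb3)
  hence "card DD = card ((carrier_vec t :: 'a vec set) \<times> (carrier_vec r :: 'a vec set) \<times> (carrier_vec r :: 'a vec set))"
    using card_image[OF inj_PP] by simp
  thus ?thesis by (simp add: card_cartesian_product card_carrier_vec)
qed

lemma card_hull: "card (DD \<inter> sdual n DD) = card (UNIV :: 'a set) ^ t * (card Kc * card Kc)"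
proof -
  have eq: "DD \<inter> sdual n DD = (\<lambda>(a, b, c). PP a b c) ` ((carrier_vec t :: 'a vec set) \<times> Kc \<times> Kc)"
    unfolding hull_eq by (rule setb3)
  have "(carrier_vec t :: 'a vec set) \<times> Kc \<times> Kc \<subseteq> (carrier_vec t :: 'a vec set) \<times> carrier_vec r \<times> carrier_vec r"
    using Kc_sub by blast
  hence "inj_on (\<lambda>(a, b, c). PP a b c) ((carrier_vec t :: 'a vec set) \<times> Kc \<times> Kc)"
    by (rule inj_on_subset[OF inj_PP])
  note inj = this
  have c1: "card ((\<lambda>(a, b, c). PP a b c) ` ((carrier_vec t :: 'a vec set) \<times> Kc \<times> Kc)) = card ((carrier_vec t :: 'a vec set) \<times> Kc \<times> Kc)"
    by (rule card_image[OF inj])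
  have "card (DD \<inter> sdual n DD) = card ((carrier_vec t :: 'a vec set) \<times> Kc \<times> Kc)"
    unfolding eq c1 ..
  thus ?thesis by (simp add: card_cartesian_product card_carrier_vec)
qed

lemma card_C: "card C = card (UNIV :: 'a set) ^ r * card (UNIV :: 'a set) ^ t"
proof -
  have "C = (\<lambda>(b, a). BrT *\<^sub>v b + BtT *\<^sub>v a) ` (carrier_vec r \<times> (carrier_vec t :: 'a vec set))"
    unfolding C_eq by (rule setb2)
  hence "card C = card ((carrier_vec r :: 'a vec set) \<times> (carrier_vec t :: 'a vec set))"
    using card_image[OF inj_Cmap] by simp
  thus ?thesis by (simp add: card_cartesian_product card_carrier_vec)
qed

lemma card_CE: "card (C \<inter> edual n C) = card Kc * card (UNIV :: 'a set) ^ t"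
proof -
  have eq: "C \<inter> edual n C = (\<lambda>(b, a). BrT *\<^sub>v b + BtT *\<^sub>v a) ` (Kc \<times> (carrier_vec t :: 'a vec set))"
    unfolding C_edual_eq by (rule setb2)
  have "Kc \<times> carrier_vec t \<subseteq> carrier_vec r \<times> carrier_vec t"
    using Kc_sub by blast
  hence "inj_on (\<lambda>(b, a). BrT *\<^sub>v b + BtT *\<^sub>v a) (Kc \<times> (carrier_vec t :: 'a vec set))"
    by (rule inj_on_subset[OF inj_Cmap])
  hence c1: "card ((\<lambda>(b, a). BrT *\<^sub>v b + BtT *\<^sub>v a) ` (Kc \<times> (carrier_vec t :: 'a vec set))) = card (Kc \<times> (carrier_vec t :: 'a vec set))"
    by (rule card_image)
  have "card (C \<inter> edual n C) = card (Kc \<times> (carrier_vec t :: 'a vec set))"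
    unfolding eq c1 ..
  thus ?thesis by (simp add: card_cartesian_product card_carrier_vec)
qed

lemma sdim_from_card: "card W = card (UNIV :: 'a set) ^ sdim m W \<Longrightarrow> card W = card (UNIV :: 'a set) ^ k \<Longrightarrow> sdim m W = k"
  using q_gt1 power_inject_exp by metis

definition "kk = sdim r Kc"

lemma card_Kc: "card Kc = card (UNIV :: 'a set) ^ kk"
  unfolding kk_def by (rule card_subspace[OF Kc_sub Kc_closed])

lemma DD_closed: "DD \<subseteq> carrier_vec (2*n)" "0\<^sub>v (2*n) \<in> DD"
    "\<And>v w. v \<in> DD \<Longrightarrow> w \<in> DD \<Longrightarrow> v + w \<in> DD"
    "\<And>c v. v \<in> DD \<Longrightarrow> c \<cdot>\<^sub>v v \<in> DD"
  unfolding D_A_def using rowsp_closed[OF DA_carrier] by auto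

lemma C_closed: "C \<subseteq> carrier_vec n" "0\<^sub>v n \<in> C"
    "\<And>v w. v \<in> C \<Longrightarrow> w \<in> C \<Longrightarrow> v + w \<in> C"
    "\<And>c v. v \<in> C \<Longrightarrow> c \<cdot>\<^sub>v v \<in> C"
proof -
  have BB: "Br @\<^sub>r Bt \<in> carrier_mat (r + t) n" using Br Bt by auto
  show "C \<subseteq> carrier_vec n" "0\<^sub>v n \<in> C"
    "\<And>v w. v \<in> C \<Longrightarrow> w \<in> C \<Longrightarrow> v + w \<in> C"
    "\<And>c v. v \<in> C \<Longrightarrow> c \<cdot>\<^sub>v v \<in> C"
    unfolding C_def using rowsp_closed[OF BB] by auto
qed

lemma sdim_DD: "sdim (2*n) DD = t + 2 * r"
proof (rule sdim_from_card)
  show "card DD = card (UNIV :: 'a set) ^ sdim (2*n) DD" by (rule card_subspace[OF DD_closed])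
  show "card DD = card (UNIV :: 'a set) ^ (t + 2 * r)" using card_DD by (simp add: power_add mult_2)
qed

lemma sdim_hull: "sdim (2*n) (DD \<inter> sdual n DD) = t + 2 * kk"
proof (rule sdim_from_card)
  show "card (DD \<inter> sdual n DD) = card (UNIV :: 'a set) ^ sdim (2*n) (DD \<inter> sdual n DD)"
    by (rule card_subspace) (use DD_closed sdual_closed[where n=n and D=DD] in auto)
  show "card (DD \<inter> sdual n DD) = card (UNIV :: 'a set) ^ (t + 2 * kk)" using card_hull card_Kc by (simp add: power_add mult_2)
qed

lemma sdim_C: "sdim n C = r + t"
proof (rule sdim_from_card)
  show "card C = card (UNIV :: 'a set) ^ sdim n C" by (rule card_subspace[OF C_closed])
  show "card C = card (UNIV :: 'a set) ^ (r + t)" using card_C by (simp add: power_add)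
qed

lemma sdim_CE: "sdim n (C \<inter> edual n C) = kk + t"
proof (rule sdim_from_card)
  show "card (C \<inter> edual n C) = card (UNIV :: 'a set) ^ sdim n (C \<inter> edual n C)"
    by (rule card_subspace) (use C_closed edual_closed[OF C_closed(1)] in auto)
  show "card (C \<inter> edual n C) = card (UNIV :: 'a set) ^ (kk + t)" using card_CE card_Kc by (simp add: power_add)
qed

lemma c_k_part:
  "c_EA n DD = sdim n C - sdim n (C \<inter> edual n C)
   \<and> k_EA n DD = int n - 2 * int r - int t + int (sdim n C - sdim n (C \<inter> edual n C))"
proof -
  have "c_EA n DD = r - kk" unfolding c_EA_def sdim_DD sdim_hull by simp
  moreover have "sdim n C - sdim n (C \<inter> edual n C) = r - kk" unfolding sdim_C sdim_CE by simp
  ultimately show ?thesis unfolding k_EA_def sdim_DD by simp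
qed

end

context da begin

lemma x_in_edualC:
  assumes x: "x \<in> carrier_vec n" and bx: "Br *\<^sub>v x = 0\<^sub>v r" and tx: "Bt *\<^sub>v x = 0\<^sub>v t"
  shows "x \<in> edual n C"
  unfolding edual_def
proof (intro CollectI conjI ballI)
  show "x \<in> carrier_vec n" by (rule x)
  fix w assume "w \<in> C"
  then obtain b a where ba: "b \<in> carrier_vec r" "a \<in> carrier_vec t" and w: "w = BrT *\<^sub>v b + BtT *\<^sub>v a"
    using C_eq by auto
  have "x \<bullet> w = x \<bullet> (BrT *\<^sub>v b) + x \<bullet> (BtT *\<^sub>v a)"
    unfolding w by (rule scalar_prod_add_distrib[of _ n]) (simp_all add: x)
  also have "\<dots> = b \<bullet> (Br *\<^sub>v x) + a \<bullet> (Bt *\<^sub>v x)"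
    using scal_T[OF Br x ba(1)] scal_T[OF Bt x ba(2)] by simp
  also have "\<dots> = 0" using bx tx ba by simp
  finally show "x \<bullet> w = 0" .
qed

lemma x_in_edualR:
  assumes x: "x \<in> carrier_vec n" and bx: "Br *\<^sub>v x = 0\<^sub>v r"
  shows "x \<in> edual n (rowsp n Br)"
  unfolding edual_def
proof (intro CollectI conjI ballI)
  show "x \<in> carrier_vec n" by (rule x)
  fix w assume "w \<in> rowsp n Br"
  then obtain b where b: "b \<in> carrier_vec r" and w: "w = BrT *\<^sub>v b"
    using rowsp_eq[OF Br] by auto
  have "x \<bullet> w = b \<bullet> (Br *\<^sub>v x)" unfolding w by (rule scal_T[OF Br x b])
  thus "x \<bullet> w = 0" using bx b by simp
qed

lemma dist_part:
  assumes noev: "\<forall>e. \<not> eigenvalue A e"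
  shows "d_EA n DD \<ge> enat (min (dH n (edual n C))
                     (nat \<lceil>(1 + 1 / real (card (UNIV :: 'a set))) * real (dH n (edual n (rowsp n Br)))\<rceil>))"
  unfolding d_EA_def
proof (rule Inf_greatest)
  fix e assume "e \<in> (\<lambda>u. enat (swt n u)) ` (sdual n DD - DD \<inter> sdual n DD)"
  then obtain u where us: "u \<in> sdual n DD" and un: "u \<notin> DD \<inter> sdual n DD" and e: "e = enat (swt n u)"
    by blast
  let ?x = "vec_first u n" and ?y = "vec_last u n"
  let ?q = "card (UNIV :: 'a set)"
  define d1 where "d1 = dH n (edual n C)"
  define d2 where "d2 = dH n (edual n (rowsp n Br))"
  define S where "S = {j. j < n \<and> (?x $ j \<noteq> 0 \<or> ?y $ j \<noteq> 0)}"
  from us have u: "u \<in> carrier_vec (2*n)" and bx: "Br *\<^sub>v ?x = 0\<^sub>v r" and by': "Br *\<^sub>v ?y = 0\<^sub>v r"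
    and axy: "(A * Bt) *\<^sub>v ?x = Bt *\<^sub>v ?y" using sdual_char by auto
  have u0: "u \<noteq> 0\<^sub>v (2*n)" using un DD_closed(2) sdual_closed(2)[of n DD] by auto
  have uxy: "u = ?x @\<^sub>v ?y" using u vec_first_last_append[of u n n] by (simp add: mult_2)
  have swt_eq: "swt n u = card S"
  proof -
    have "{j. j < n \<and> (u $ j \<noteq> 0 \<or> u $ (n + j) \<noteq> 0)} = S"
      unfolding S_def using u by (auto simp: vec_first_def vec_last_def)
    thus ?thesis unfolding swt_def by simp
  qed
  have finS: "finite S" unfolding S_def by simp
  have hx: "hwt ?x \<le> card S" unfolding hwt_def S_def by (rule card_mono) (auto simp: finS[unfolded S_def])
  have hy: "hwt ?y \<le> card S" unfolding hwt_def S_def by (rule card_mono) (auto simp: finS[unfolded S_def])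
  have xc: "?x \<in> carrier_vec n" and yc: "?y \<in> carrier_vec n" by auto
  have main: "min d1 (nat \<lceil>(1 + 1 / real ?q) * real d2\<rceil>) \<le> card S"
  proof (cases "Bt *\<^sub>v ?x = 0\<^sub>v t")
    case True
    have ty: "Bt *\<^sub>v ?y = 0\<^sub>v t" using axy[symmetric] True A Bt by simp
    have ex: "?x \<in> edual n C" by (rule x_in_edualC[OF xc bx True])
    have ey: "?y \<in> edual n C" by (rule x_in_edualC[OF yc by' ty])
    have "?x \<noteq> 0\<^sub>v n \<or> ?y \<noteq> 0\<^sub>v n"
    proof (rule ccontr)
      assume "\<not> (?x \<noteq> 0\<^sub>v n \<or> ?y \<noteq> 0\<^sub>v n)"
      hence "u = 0\<^sub>v n @\<^sub>v 0\<^sub>v n" using uxy by simp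
      also have "\<dots> = 0\<^sub>v (2*n)" by (rule eq_vecI) (auto simp: mult_2)
      finally show False using u0 by simp
    qed
    hence "d1 \<le> card S"
    proof
      assume "?x \<noteq> 0\<^sub>v n" thus ?thesis using dH_le[OF ex] hx unfolding d1_def by (meson le_trans)
    next
      assume "?y \<noteq> 0\<^sub>v n" thus ?thesis using dH_le[OF ey] hy unfolding d1_def by (meson le_trans)
    qed
    thus ?thesis by simp
  next
    case False
    let ?z = "Bt *\<^sub>v ?x"
    have x0: "?x \<noteq> 0\<^sub>v n" using False by auto
    have exR: "?x \<in> edual n (rowsp n Br)" by (rule x_in_edualR[OF xc bx])
    have eyR: "?y \<in> edual n (rowsp n Br)" by (rule x_in_edualR[OF yc by'])
    have Rc: "rowsp n Br \<subseteq> carrier_vec n" by (rule rowsp_closed(1)[OF Br])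
    have wl: "d2 \<le> hwt (?y + l \<cdot>\<^sub>v ?x)" for l
    proof -
      have mem: "?y + l \<cdot>\<^sub>v ?x \<in> edual n (rowsp n Br)"
        using edual_closed(3,4)[OF Rc] exR eyR by blast
      have "?y + l \<cdot>\<^sub>v ?x \<noteq> 0\<^sub>v n"
      proof
        assume h0: "?y + l \<cdot>\<^sub>v ?x = 0\<^sub>v n"
        have "Bt *\<^sub>v (?y + l \<cdot>\<^sub>v ?x) = Bt *\<^sub>v ?y + l \<cdot>\<^sub>v ?z"
          using mult_add_distrib_mat_vec[OF Bt yc, of "l \<cdot>\<^sub>v ?x"] mult_mat_vec[OF Bt xc] by simp
        hence e: "Bt *\<^sub>v ?y + l \<cdot>\<^sub>v ?z = 0\<^sub>v t" using h0 by simp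
        have "A *\<^sub>v ?z = (- l) \<cdot>\<^sub>v ?z"
        proof (rule eq_vecI)
          fix i assume "i < dim_vec ((- l) \<cdot>\<^sub>v ?z)" hence i: "i < t" by simp
          have "(Bt *\<^sub>v ?y + l \<cdot>\<^sub>v ?z) $ i = 0" using e i by simp
          hence "(Bt *\<^sub>v ?y) $ i + l * ?z $ i = 0" using i by simp
          moreover have "(A *\<^sub>v ?z) $ i = (Bt *\<^sub>v ?y) $ i" using axy A Bt by simp
          ultimately show "(A *\<^sub>v ?z) $ i = ((- l) \<cdot>\<^sub>v ?z) $ i" using i by (simp add: add_eq_0_iff)
        qed (use A in simp)
        hence "eigenvector A ?z (- l)" unfolding eigenvector_def using False A by simp
        hence "eigenvalue A (- l)" unfolding eigenvalue_def by blast
        thus False using noev by blast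
      qed
      thus ?thesis using dH_le[OF mem] unfolding d2_def by simp
    qed
    have wx: "d2 \<le> hwt ?x" using dH_le[OF exR x0] unfolding d2_def by simp
    have "card (UNIV :: 'a option set) * d2 \<le> ?q * card {j. j < n \<and> (?x $ j \<noteq> 0 \<or> ?y $ j \<noteq> 0)}"
      by (rule two_dim_support[OF xc yc wx wl])
    hence key: "(?q + 1) * d2 \<le> ?q * card S" unfolding S_def card_UNIV_option' .
    have qpos: "0 < real ?q" using q_gt1 by simp
    have "(1 + 1 / real ?q) * real d2 = real ((?q + 1) * d2) / real ?q"
      using qpos by (simp add: field_simps)
    also have "\<dots> \<le> real (?q * card S) / real ?q"
      by (rule divide_right_mono) (use key qpos in \<open>simp only: of_nat_le_iff, simp\<close>)
    also have "\<dots> = real (card S)" using qpos by simp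
    finally have "(1 + 1 / real ?q) * real d2 \<le> real (card S)" .
    hence "nat \<lceil>(1 + 1 / real ?q) * real d2\<rceil> \<le> card S" by simp
    thus ?thesis by (rule min.coboundedI2)
  qed
  thus "enat (min (dH n (edual n C)) (nat \<lceil>(1 + 1 / real ?q) * real (dH n (edual n (rowsp n Br)))\<rceil>))
        \<le> e" unfolding e swt_eq d1_def d2_def by simp
qed

end

theorem theorem2p3:
  fixes Br Bt A :: "'a::{finite,field} mat" and n r t :: nat and C :: "'a vec set"
  assumes n: "n \<ge> 1"
    and Br: "Br \<in> carrier_mat r n" and Bt: "Bt \<in> carrier_mat t n"
    and Br_li: "rows_lin_indep n Br" and Bt_li: "rows_lin_indep n Bt"
    and C_def: "C = rowsp n (Br @\<^sub>r Bt)"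
    and direct: "rowsp n Br \<inter> rowsp n Bt = {0\<^sub>v n}"
    and Bt_dual: "rowsp n Bt \<subseteq> edual n C"
    and t2: "t \<ge> 2"
    and A: "A \<in> carrier_mat t t" and A_inv: "invertible_mat A"
    and A_noev: "\<forall>e. \<not> eigenvalue A e"
  shows "c_EA n (D_A n A Br Bt) = sdim n C - sdim n (C \<inter> edual n C)
       \<and> k_EA n (D_A n A Br Bt) = int n - 2 * int r - int t + int (sdim n C - sdim n (C \<inter> edual n C))
       \<and> d_EA n (D_A n A Br Bt) \<ge>
           enat (min (dH n (edual n C))
                     (nat \<lceil>(1 + 1 / real (card (UNIV :: 'a set))) * real (dH n (edual n (rowsp n Br)))\<rceil>))"
proof -
  interpret da Br Bt A n r t C
    by (unfold_locales) (rule Br Bt Br_li Bt_li C_def direct Bt_dual A)+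
  show ?thesis using c_k_part dist_part[OF A_noev] by blast
qed

end
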